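(* Let $m\ge2$. The polynomial $G_m(t,\beta)$ (in the variable $t$) satisfies: (i) for $0<\beta<1$ all zeros of $G_m(t,\beta)$ are simple and negative; (ii) for $0<\beta<\frac12$, $G_m(t,\beta)$ has exactly $\lfloor\frac m2\rfloor$ zeros in $|t|<1$ and $\lfloor\frac{m-1}2\rfloor$ zeros in $|t|>1$; (iii) for $\frac12<\beta<1$, $G_m(t,\beta)$ has exactly $\lfloor\frac{m-1}2\rfloor$ zeros in $|t|<1$ and $\lfloor\frac m2\rfloor$ zeros in $|t|>1$.
   Context: $G_1(t,\beta)=-1$ and for $m\ge2$, $G_m(t,\beta)=[\beta(t-1)-(m-1)t]G_{m-1}(t,\beta)+t(t-1)\frac{\partial}{\partial t}G_{m-1}(t,\beta)$; $G_m$ is a polynomial of degree at most $m-1$ in $t$. *)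

theory Defs
  imports "HOL-Computational_Algebra.Polynomial"
begin

text \<open>G m beta as a real polynomial in t.  G 1 = -1 and for m >= 2,
  G m = (beta (t-1) - (m-1) t) G (m-1) + t (t-1) d/dt G (m-1).
  The value at m = 0 is an irrelevant filler.\<close>
fun G :: "nat \<Rightarrow> real \<Rightarrow> real poly" where
  "G 0 \<beta> = 0"
| "G (Suc 0) \<beta> = [:-1:]"
| "G (Suc (Suc n)) \<beta> =
     [:-\<beta>, \<beta> - real (Suc n):] * G (Suc n) \<beta> + [:0, -1, 1:] * pderiv (G (Suc n) \<beta>)"

definition GC :: "nat \<Rightarrow> real \<Rightarrow> complex poly" where
  "GC m \<beta> = map_poly complex_of_real (G m \<beta>)"

end

theory Submission
  imports Defs
begin

lemma coeff_lin_mult_Suc: "coeff ([:a0, a1:] * (P::real poly)) (Suc k) = a0 * coeff P (Suc k) + a1 * coeff P k"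
  by (simp add: mult_pCons_left)

lemma coeff_W_mult_SS: "coeff ([:0, -1, 1:] * (Q::real poly)) (Suc (Suc k)) = - coeff Q (Suc k) + coeff Q k"
  by (simp add: mult_pCons_left)

lemma coeff_W_mult_S0: "coeff ([:0, -1, 1:] * (Q::real poly)) (Suc 0) = - coeff Q 0"
  by (simp add: mult_pCons_left)

lemma G_deg_lc: "degree (G (Suc n) b) \<le> n \<and> coeff (G (Suc n) b) n = -((b-1)^n)"
proof (induction n)
  case 0
  then show ?case by simp
next
  case (Suc n)
  define P where "P = G (Suc n) b"
  have dP: "degree P \<le> n" and cP: "coeff P n = -((b-1)^n)" using Suc P_def by auto
  have eq: "G (Suc (Suc n)) b = [:-b, b - real (Suc n):] * P + [:0, -1, 1:] * pderiv P"
    by (simp add: P_def)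
  show ?case
  proof (cases n)
    case 0
    then show ?thesis by (simp add: P_def)
  next
    case (Suc n')
    have d1: "degree ([:-b, b - real (Suc n):] * P) \<le> Suc n"
      by (rule order.trans[OF degree_mult_le]) (use dP in auto)
    have d2: "degree ([:0, -1, 1:] * pderiv P) \<le> Suc n"
      by (rule order.trans[OF degree_mult_le]) (use dP Suc in \<open>auto simp: degree_pderiv\<close>)
    have deg: "degree (G (Suc (Suc n)) b) \<le> Suc n"
      unfolding eq by (rule degree_add_le[OF d1 d2])
    have z: "coeff P (Suc n) = 0" using dP by (simp add: coeff_eq_0)
    have c2: "coeff ([:0,-1,1:]*pderiv P) (Suc n) = - coeff (pderiv P) n + coeff (pderiv P) n'"
      using coeff_W_mult_SS[of "pderiv P" n'] Suc by simp
    have "coeff (G (Suc (Suc n)) b) (Suc n) = (b - real (Suc n)) * coeff P n + (- coeff (pderiv P) n + coeff (pderiv P) n')"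
      unfolding eq coeff_add coeff_lin_mult_Suc c2 using z by simp
    also have "\<dots> = (b - 1) * coeff P n"
      using z Suc by (simp add: coeff_pderiv algebra_simps)
    finally show ?thesis using deg cP by simp
  qed
qed

lemma G_S2: "G (Suc (Suc n)) 0 = [:0,1:] * G (Suc (Suc n)) 1"
proof (induction n)
  case 0
  then show ?case by simp
next
  case (Suc n)
  define A where "A = G (Suc (Suc n)) 0"
  define B where "B = G (Suc (Suc n)) 1"
  have AB: "A = [:0,1:] * B" using Suc by (simp add: A_def B_def)
  have "G (Suc (Suc (Suc n))) 0 = [:-0, 0 - real (Suc (Suc n)):] * A + [:0, -1, 1:] * pderiv A"
    by (simp only: G.simps A_def)
  also have "\<dots> = [:0,1:] * ([:-1, 1 - real (Suc (Suc n)):] * B + [:0, -1, 1:] * pderiv B)"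
    unfolding AB
    by (rule poly_eq_poly_eq_iff[THEN iffD1], rule ext)
      (simp add: pderiv_mult pderiv_pCons algebra_simps del: mult_pCons_left mult_pCons_right)
  also have "\<dots> = [:0,1:] * G (Suc (Suc (Suc n))) 1"
    by (simp only: G.simps B_def)
  finally show ?case .
qed

definition hasD :: "(real \<Rightarrow> real poly) \<Rightarrow> real poly \<Rightarrow> real \<Rightarrow> bool" where
  "hasD P P' b \<longleftrightarrow> (\<forall>k. ((\<lambda>b. coeff (P b) k) has_real_derivative coeff P' k) (at b))"

lemma hasD_const: "hasD (\<lambda>b. Q) 0 b"
  by (simp add: hasD_def)

lemma hasD_add: "hasD P P' b \<Longrightarrow> hasD Q Q' b \<Longrightarrow> hasD (\<lambda>b. P b + Q b) (P' + Q') b"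
  by (auto simp: hasD_def intro!: derivative_eq_intros)

lemma hasD_mult:
  assumes "hasD P P' b" "hasD Q Q' b"
  shows "hasD (\<lambda>b. P b * Q b) (P' * Q b + P b * Q') b"
  unfolding hasD_def
proof
  fix k
  have "((\<lambda>b. \<Sum>i\<le>k. coeff (P b) i * coeff (Q b) (k-i)) has_real_derivative
         (\<Sum>i\<le>k. coeff P' i * coeff (Q b) (k-i) + coeff (P b) i * coeff Q' (k-i))) (at b)"
    using assms unfolding hasD_def by (intro DERIV_sum) (auto intro!: derivative_eq_intros)
  then show "((\<lambda>b. coeff (P b * Q b) k) has_real_derivative coeff (P' * Q b + P b * Q') k) (at b)"
    by (simp add: coeff_mult sum.distrib)
qed

lemma hasD_lin: "hasD (\<lambda>b. [:-b, b - c:]) [:-1, 1:] b"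
  unfolding hasD_def
proof
  fix k
  show "((\<lambda>b. coeff [:-b, b - c:] k) has_real_derivative coeff [:-1, 1:] k) (at b)"
  proof (cases k)
    case 0
    then show ?thesis by (auto intro!: derivative_eq_intros)
  next
    case (Suc k')
    then show ?thesis by (cases k') (auto intro!: derivative_eq_intros)
  qed
qed

lemma hasD_pderiv: "hasD P P' b \<Longrightarrow> hasD (\<lambda>b. pderiv (P b)) (pderiv P') b"
  by (auto simp: hasD_def coeff_pderiv intro!: derivative_eq_intros)

lemma hasD_cong: "hasD P P' b \<Longrightarrow> P' = P'' \<Longrightarrow> hasD P P'' b"
  by simp

lemma G_deg: "degree (G n b) \<le> n - 1"
  using G_deg_lc[of "n - 1" b] by (cases n) auto

lemma hasD_G: "hasD (\<lambda>b. G (Suc n) b) (smult (real n) ([:-1,1:] * G n b)) b"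
proof (induction n arbitrary: b)
  case 0
  then show ?case using hasD_const[of "[:-1:]" b] by simp
next
  case (Suc n)
  define D where "D = smult (real n) ([:-1,1:] * G n b)"
  have h: "hasD (\<lambda>b. G (Suc (Suc n)) b)
      ([:-1, 1:] * G (Suc n) b + [:-b, b - real (Suc n):] * D + (0 * pderiv (G (Suc n) b) + [:0, -1, 1:] * pderiv D)) b"
    unfolding G.simps D_def
    by (intro hasD_add hasD_mult hasD_lin Suc hasD_pderiv hasD_const)
  have e: "[:-1, 1:] * G (Suc n) b + [:-b, b - real (Suc n):] * D + (0 * pderiv (G (Suc n) b) + [:0, -1, 1:] * pderiv D)
        = smult (real (Suc n)) ([:-1,1:] * G (Suc n) b)"
  proof (cases n)
    case 0
    then show ?thesis by (simp add: D_def)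
  next
    case (Suc n')
    show ?thesis unfolding D_def Suc G.simps
      by (rule poly_eq_poly_eq_iff[THEN iffD1], rule ext)
        (simp add: pderiv_mult pderiv_pCons pderiv_smult algebra_simps del: mult_pCons_left mult_pCons_right)
  qed
  show ?case using hasD_cong[OF h e] .
qed


lemma poly_le_sum:
  fixes p :: "real poly"
  assumes "degree p \<le> N"
  shows "poly p x = (\<Sum>i\<le>N. coeff p i * x ^ i)"
proof -
  have "poly p x = (\<Sum>i\<le>degree p. coeff p i * x ^ i)" by (rule poly_altdef)
  also have "\<dots> = (\<Sum>i\<le>N. coeff p i * x ^ i)"
    by (rule sum.mono_neutral_left) (use assms in \<open>auto simp: coeff_eq_0\<close>)
  finally show ?thesis .
qed

lemma DERIV_G:
  "((\<lambda>b. poly (G (Suc n) b) t) has_real_derivative (real n * (t - 1) * poly (G n b) t)) (at b)"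
proof -
  define D where "D = smult (real n) ([:-1,1:] * G n b)"
  have f: "(\<lambda>b. poly (G (Suc n) b) t) = (\<lambda>b. \<Sum>i\<le>n. coeff (G (Suc n) b) i * t ^ i)"
    by (rule ext, rule poly_le_sum) (use G_deg[of "Suc n"] in simp)
  have hd: "hasD (\<lambda>b. G (Suc n) b) D b" unfolding D_def by (rule hasD_G)
  have "((\<lambda>b. \<Sum>i\<le>n. coeff (G (Suc n) b) i * t ^ i) has_real_derivative (\<Sum>i\<le>n. coeff D i * t ^ i)) (at b)"
    using hd unfolding hasD_def by (intro DERIV_sum) (auto intro!: derivative_eq_intros)
  moreover have "degree D \<le> n"
  proof (cases n)
    case 0 then show ?thesis by (simp add: D_def)
  next
    case (Suc n')
    have "degree ([:-1,1:] * G n b) \<le> n"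
      by (rule order.trans[OF degree_mult_le]) (use G_deg[of n b] Suc in simp)
    then show ?thesis unfolding D_def by (simp add: degree_smult_le order.trans)
  qed
  ultimately have "((\<lambda>b. poly (G (Suc n) b) t) has_real_derivative poly D t) (at b)"
    unfolding f by (simp add: poly_le_sum)
  then show ?thesis by (simp add: D_def algebra_simps)
qed

definition g :: "nat \<Rightarrow> real \<Rightarrow> real" where "g m b = poly (G m b) (-1)"

lemma DERIV_g: "(g (Suc n) has_real_derivative (- 2 * real n * g n b)) (at b)"
  using DERIV_G[of n "-1" b] unfolding g_def by (simp add: algebra_simps)

lemma g_S2: "g (Suc (Suc n)) 0 = - g (Suc (Suc n)) 1"
  unfolding g_def by (subst G_S2) simp

lemma g_sym: "g (Suc n) (1 - b) = (-1)^n * g (Suc n) b"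
proof (induction n arbitrary: b)
  case 0
  then show ?case by (simp add: g_def)
next
  case (Suc n)
  define f where "f b = g (Suc (Suc n)) b - (-1)^(Suc n) * g (Suc (Suc n)) (1 - b)" for b
  have d: "(f has_real_derivative 0) (at x)" for x
  proof -
    have d1: "((\<lambda>b. g (Suc (Suc n)) (1 - b)) has_real_derivative (- 2 * real (Suc n) * g (Suc n) (1 - x)) * (-1)) (at x)"
      by (rule DERIV_chain2[OF DERIV_g]) (auto intro!: derivative_eq_intros)
    have "(f has_real_derivative (- 2 * real (Suc n) * g (Suc n) x) - (-1)^(Suc n) * ((- 2 * real (Suc n) * g (Suc n) (1 - x)) * (-1))) (at x)"
      unfolding f_def by (intro DERIV_diff DERIV_g DERIV_cmult d1)
    moreover have "(- 2 * real (Suc n) * g (Suc n) x) - (-1)^(Suc n) * ((- 2 * real (Suc n) * g (Suc n) (1 - x)) * (-1)) = 0"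
      using Suc[of x] by (simp add: algebra_simps)
    ultimately show ?thesis by simp
  qed
  have c: "f x = f y" for x y by (rule DERIV_isconst_all) (use d in auto)
  have "f 0 = 0"
    using c[of 0 1] g_S2[of n] unfolding f_def by (cases "even n") auto
  then have "f b = 0" using c[of b 0] by simp
  then show ?case unfolding f_def by (cases "even n") auto
qed


lemma mvt_g:
  assumes "a < b"
  shows "\<exists>z. a < z \<and> z < b \<and> g (Suc (Suc n)) b - g (Suc (Suc n)) a = (b - a) * (- 2 * real (Suc n) * g (Suc n) z)"
  using MVT2[OF assms, of "g (Suc (Suc n))" "\<lambda>z. - 2 * real (Suc n) * g (Suc n) z"] DERIV_g by blast

lemma sgn_pos_mult: "(c::real) > 0 \<Longrightarrow> sgn (c * x) = sgn x"
  by (simp add: sgn_mult)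

lemma g_sign:
  "(0 < b \<and> b < 1/2 \<longrightarrow> sgn (g (Suc n) b) = (-1)^(Suc n) * (-1)^(Suc n div 2)) \<and>
   (1/2 < b \<and> b < 1 \<longrightarrow> sgn (g (Suc n) b) = (-1)^(Suc n) * (-1)^(n div 2))"
proof (induction n arbitrary: b)
  case 0
  then show ?case by (simp add: g_def)
next
  case (Suc n)
  show ?case
  proof (cases "even n")
    case True
    then obtain j where j: "n = 2 * j" by (auto elim: evenE)
    have h0: "g (Suc (Suc n)) (1/2) = 0"
      using g_sym[of "Suc n" "1/2"] True by simp
    show ?thesis
    proof (intro conjI impI)
      assume b: "0 < b \<and> b < 1/2"
      then obtain z where z: "b < z" "z < 1/2"
        "g (Suc (Suc n)) (1/2) - g (Suc (Suc n)) b = (1/2 - b) * (- 2 * real (Suc n) * g (Suc n) z)"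
        using mvt_g[of b "1/2" n] by auto
      have "g (Suc (Suc n)) b = ((1/2 - b) * (2 * real (Suc n))) * g (Suc n) z"
        using z(3) h0 by (simp add: algebra_simps)
      then have "sgn (g (Suc (Suc n)) b) = sgn (g (Suc n) z)"
        using b by (simp only: sgn_pos_mult) (simp add: sgn_mult)
      also have "\<dots> = (-1)^(Suc n) * (-1)^(Suc n div 2)"
        using Suc.IH[of z] b z by auto
      finally show "sgn (g (Suc (Suc n)) b) = (-1)^(Suc (Suc n)) * (-1)^(Suc (Suc n) div 2)"
        using j by simp
    next
      assume b: "1/2 < b \<and> b < 1"
      then obtain z where z: "1/2 < z" "z < b"
        "g (Suc (Suc n)) b - g (Suc (Suc n)) (1/2) = (b - 1/2) * (- 2 * real (Suc n) * g (Suc n) z)"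
        using mvt_g[of "1/2" b n] by auto
      have "g (Suc (Suc n)) b = - (((b - 1/2) * (2 * real (Suc n))) * g (Suc n) z)"
        using z(3) h0 by (simp add: algebra_simps)
      then have "sgn (g (Suc (Suc n)) b) = - sgn (g (Suc n) z)"
        using b by (simp add: sgn_mult)
      also have "\<dots> = - ((-1)^(Suc n) * (-1)^(n div 2))"
        using Suc.IH[of z] b z by auto
      finally show "sgn (g (Suc (Suc n)) b) = (-1)^(Suc (Suc n)) * (-1)^(Suc n div 2)"
        using j by simp
    qed
  next
    case False
    then obtain j where j: "n = 2 * j + 1" using oddE by blast
    have h0: "g (Suc (Suc n)) 0 = 0"
      using g_sym[of "Suc n" 0] g_S2[of n] False by simp
    have h1: "g (Suc (Suc n)) 1 = 0"
      using g_S2[of n] h0 by simp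
    show ?thesis
    proof (intro conjI impI)
      assume b: "0 < b \<and> b < 1/2"
      then obtain z where z: "0 < z" "z < b"
        "g (Suc (Suc n)) b - g (Suc (Suc n)) 0 = (b - 0) * (- 2 * real (Suc n) * g (Suc n) z)"
        using mvt_g[of 0 b n] by auto
      have "g (Suc (Suc n)) b = - ((b * (2 * real (Suc n))) * g (Suc n) z)"
        using z(3) h0 by (simp add: algebra_simps)
      then have "sgn (g (Suc (Suc n)) b) = - sgn (g (Suc n) z)"
        using b by (simp add: sgn_mult)
      also have "\<dots> = - ((-1)^(Suc n) * (-1)^(Suc n div 2))"
        using Suc.IH[of z] b z by auto
      finally show "sgn (g (Suc (Suc n)) b) = (-1)^(Suc (Suc n)) * (-1)^(Suc (Suc n) div 2)"
        using j by simp
    next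
      assume b: "1/2 < b \<and> b < 1"
      then obtain z where z: "b < z" "z < 1"
        "g (Suc (Suc n)) 1 - g (Suc (Suc n)) b = (1 - b) * (- 2 * real (Suc n) * g (Suc n) z)"
        using mvt_g[of b 1 n] by auto
      have "g (Suc (Suc n)) b = ((1 - b) * (2 * real (Suc n))) * g (Suc n) z"
        using z(3) h1 by (simp add: algebra_simps)
      then have "sgn (g (Suc (Suc n)) b) = sgn (g (Suc n) z)"
        using b by (simp add: sgn_mult)
      also have "\<dots> = (-1)^(Suc n) * (-1)^(n div 2)"
        using Suc.IH[of z] b z by auto
      finally show "sgn (g (Suc (Suc n)) b) = (-1)^(Suc (Suc n)) * (-1)^(Suc n div 2)"
        using j by simp
    qed
  qed
qed


lemma sgn_prod_diff:
  fixes S :: "real set"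
  assumes "finite S" "x \<notin> S"
  shows "sgn (\<Prod>s\<in>S. (x - s)) = (-1) ^ card {s\<in>S. x < s}"
  using assms
proof (induction S rule: finite_induct)
  case empty
  then show ?case by simp
next
  case (insert a S)
  have fin: "finite {s\<in>S. x < s}" using insert by auto
  have "sgn (\<Prod>s\<in>insert a S. (x - s)) = sgn (x - a) * sgn (\<Prod>s\<in>S. (x - s))"
    using insert by (simp add: sgn_mult)
  also have "\<dots> = sgn (x - a) * (-1) ^ card {s\<in>S. x < s}" using insert by simp
  also have "\<dots> = (-1) ^ card {s\<in>insert a S. x < s}"
  proof (cases "x < a")
    case True
    then have "{s\<in>insert a S. x < s} = insert a {s\<in>S. x < s}" by auto
    then show ?thesis using True fin insert by simp
  next
    case False
    then have "{s\<in>insert a S. x < s} = {s\<in>S. x < s}" by auto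
    moreover have "x > a" using False insert by auto
    ultimately show ?thesis by simp
  qed
  finally show ?case .
qed

lemma poly_pderiv_prod_root:
  fixes S :: "real set"
  assumes "finite S" "r \<in> S"
  shows "poly (pderiv (\<Prod>s\<in>S. [:-s, 1:])) r = (\<Prod>s\<in>S-{r}. (r - s))"
proof -
  have "(\<Prod>s\<in>S. [:-s, 1:]) = [:-r, 1:] * (\<Prod>s\<in>S-{r}. [:-s, 1:])"
    using assms by (simp add: prod.remove)
  then show ?thesis by (simp add: pderiv_mult poly_prod pderiv_pCons del: mult_pCons_left)
qed

lemma alt_roots:
  fixes p :: "real poly" and A :: "real set"
  assumes "finite A" "p \<noteq> 0"
  shows "\<And>\<sigma>. \<sigma> = 1 \<or> \<sigma> = -1 \<Longrightarrow> (\<forall>a\<in>A. sgn (poly p a) = \<sigma> * (-1) ^ card {a'\<in>A. a < a'}) \<Longrightarrow>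
     card A - 1 \<le> card {x. Min A < x \<and> x < Max A \<and> poly p x = 0}"
  using assms(1)
proof (induction A rule: finite_linorder_max_induct)
  case empty
  then show ?case by simp
next
  case (insert b A)
  show ?case
  proof (cases "A = {}")
    case True
    then show ?thesis by simp
  next
    case False
    have finr: "finite {x. poly p x = 0}" using assms(2) by (rule poly_roots_finite)
    have cnt: "card {a'\<in>insert b A. a < a'} = Suc (card {a'\<in>A. a < a'})" if "a \<in> A" for a
    proof -
      have "{a'\<in>insert b A. a < a'} = insert b {a'\<in>A. a < a'}" using insert that by auto
      moreover have "b \<notin> {a'\<in>A. a < a'}" using insert by auto
      ultimately show ?thesis using insert by simp
    qed
    have IHs: "\<forall>a\<in>A. sgn (poly p a) = (-\<sigma>) * (-1) ^ card {a'\<in>A. a < a'}"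
      using insert.prems(2) cnt by auto
    have IH: "card A - 1 \<le> card {x. Min A < x \<and> x < Max A \<and> poly p x = 0}"
      using insert.IH[OF _ IHs] insert.prems(1) by auto
    have MA: "Max A \<in> A" "Max A < b" using False insert by auto
    have "{a'\<in>insert b A. Max A < a'} = {b}" using insert False by auto
    then have s1: "sgn (poly p (Max A)) = - \<sigma>" using insert.prems(2) MA by auto
    have e: "{a'\<in>insert b A. b < a'} = {}" using insert by auto
    have "sgn (poly p b) = \<sigma> * (-1) ^ card {a'\<in>insert b A. b < a'}" using insert.prems(2) by blast
    then have s2: "sgn (poly p b) = \<sigma>" by (simp only: e card.empty power_0 mult_1_right)
    obtain y where y: "Max A < y" "y < b" "poly p y = 0"
    proof (cases "\<sigma> = 1")
      case True
      then show ?thesis using poly_IVT_pos[OF MA(2), of p] s1 s2 that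
        by (auto simp: sgn_if split: if_splits)
    next
      case False
      then have "\<sigma> = -1" using insert.prems(1) by auto
      then show ?thesis using poly_IVT_neg[OF MA(2), of p] s1 s2 that
        by (auto simp: sgn_if split: if_splits)
    qed
    have mins: "Min (insert b A) = Min A" "Max (insert b A) = b"
      using insert False by (auto simp: Min_insert intro!: Max_eqI)
    have sub: "insert y {x. Min A < x \<and> x < Max A \<and> poly p x = 0} \<subseteq> {x. Min (insert b A) < x \<and> x < Max (insert b A) \<and> poly p x = 0}"
      using y mins MA False by auto (meson Min_le insert.hyps(1) le_less_trans)
    have "y \<notin> {x. Min A < x \<and> x < Max A \<and> poly p x = 0}" using y by auto
    then have "card (insert y {x. Min A < x \<and> x < Max A \<and> poly p x = 0}) = Suc (card {x. Min A < x \<and> x < Max A \<and> poly p x = 0})"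
      using finr by (intro card_insert_disjoint) (auto intro: finite_subset[OF _ finr])
    moreover have "card (insert y {x. Min A < x \<and> x < Max A \<and> poly p x = 0}) \<le> card {x. Min (insert b A) < x \<and> x < Max (insert b A) \<and> poly p x = 0}"
      by (rule card_mono[OF _ sub]) (auto intro: finite_subset[OF _ finr])
    moreover have "card A > 0" using False insert by auto
    moreover have "b \<notin> A" using insert by auto
    ultimately show ?thesis using IH insert by (simp add: card_insert_if)
  qed
qed

lemma factor_roots:
  fixes p :: "real poly"
  assumes "p \<noteq> 0" "card {x. poly p x = 0} = degree p"
  shows "p = smult (lead_coeff p) (\<Prod>x\<in>{x. poly p x = 0}. [:-x, 1:])"
  using assms
proof (induction "degree p" arbitrary: p rule: less_induct)
  case less
  show ?case
  proof (cases "degree p = 0")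
    case True
    then have "{x. poly p x = 0} = {}"
      using less.prems poly_roots_finite[OF less.prems(1)] by auto
    then show ?thesis using True by (auto elim: degree_eq_zeroE)
  next
    case False
    have fin: "finite {x. poly p x = 0}" using less.prems(1) by (rule poly_roots_finite)
    then obtain z where z: "poly p z = 0" using False less.prems(2) by fastforce
    then obtain q where q: "p = [:-z, 1:] * q" using poly_eq_0_iff_dvd by blast
    have q0: "q \<noteq> 0" using q less.prems by auto
    have dq: "degree p = Suc (degree q)" using q q0 by (simp add: degree_mult_eq del: mult_pCons_left)
    have sub: "{x. poly p x = 0} - {z} \<subseteq> {x. poly q x = 0}" using q by auto
    have "card {x. poly q x = 0} \<le> card ({x. poly p x = 0} - {z})"
      using card_poly_roots_bound[OF q0] less.prems(2) dq fin z by auto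
    then have eqr: "{x. poly q x = 0} = {x. poly p x = 0} - {z}"
      using card_seteq[OF poly_roots_finite[OF q0] sub] by auto
    have "card {x. poly q x = 0} = degree q"
      using eqr less.prems(2) dq fin z by simp
    then have qf: "q = smult (lead_coeff q) (\<Prod>x\<in>{x. poly q x = 0}. [:-x, 1:])"
      using less.hyps[of q] dq q0 by auto
    have lc: "lead_coeff p = lead_coeff q" using q by (simp add: lead_coeff_mult del: mult_pCons_left)
    have "p = [:-z, 1:] * smult (lead_coeff q) (\<Prod>x\<in>{x. poly p x = 0} - {z}. [:-x, 1:])"
      using q qf eqr by metis
    also have "\<dots> = smult (lead_coeff p) (\<Prod>x\<in>{x. poly p x = 0}. [:-x, 1:])"
      using lc fin z by (simp add: prod.remove[of _ z] mult_smult_right)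
    finally show ?thesis .
  qed
qed

lemma neg_infty_neg:
  fixes p :: "real poly"
  assumes "lead_coeff p * (-1) ^ degree p < 0"
  shows "\<exists>x0. \<forall>x\<le>x0. poly p x < 0"
proof -
  define r where "r = - pcompose p [:0, -1:]"
  have "lead_coeff r = - (lead_coeff p * (-1) ^ degree p)"
    unfolding r_def by (simp add: lead_coeff_minus lead_coeff_comp)
  then have "lead_coeff r > 0" using assms by simp
  then obtain N where N: "\<forall>x\<ge>N. poly r x \<ge> lead_coeff r" using poly_pinfty_gt_lc by blast
  have "poly p x < 0" if "x \<le> -N" for x
  proof -
    have "poly r (-x) \<ge> lead_coeff r" using N that by auto
    moreover have "poly r (-x) = - poly p x" by (simp add: r_def poly_pcompose)
    ultimately show ?thesis using \<open>lead_coeff r > 0\<close> by simp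
  qed
  then show ?thesis by blast
qed


lemma sgn_c: "(b::real) < 1 \<Longrightarrow> sgn (-((b-1)^n)) = -((-1)^n)"
  by (simp add: sgn_minus)

lemma poly_factored_sgn:
  fixes S :: "real set"
  assumes "finite S" "x \<notin> S"
  shows "sgn (poly (smult c (\<Prod>s\<in>S. [:-s, 1:])) x) = sgn c * (-1) ^ card {s\<in>S. x < s}"
proof -
  have "poly (smult c (\<Prod>s\<in>S. [:-s, 1:])) x = c * (\<Prod>s\<in>S. (x - s))"
    by (simp add: poly_prod)
  then show ?thesis using sgn_prod_diff[OF assms] by (simp only: sgn_mult)
qed

lemma G_facts:
  assumes "b < 1"
  shows "G (Suc n) b \<noteq> 0 \<and> degree (G (Suc n) b) = n \<and> lead_coeff (G (Suc n) b) = -((b-1)^n)"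
proof -
  have c: "coeff (G (Suc n) b) n \<noteq> 0" using G_deg_lc[of n b] assms by simp
  then have "degree (G (Suc n) b) = n" using G_deg_lc[of n b] le_degree[OF c] by simp
  then show ?thesis using c G_deg_lc[of n b] by auto
qed

lemma neg_infty_G:
  assumes "b < 1"
  shows "\<exists>x0. \<forall>x\<le>x0. poly (G (Suc n) b) x < 0"
proof (rule neg_infty_neg)
  have d: "degree (G (Suc n) b) = n" and l: "lead_coeff (G (Suc n) b) = -((b-1)^n)"
    using G_facts[OF assms, of n] by auto
  have "lead_coeff (G (Suc n) b) * (-1) ^ degree (G (Suc n) b) = -((b-1)^n * (-1)^n)"
    using l d by simp
  also have "\<dots> = - (((b-1) * (-1))^n)" by (simp only: power_mult_distrib)
  also have "\<dots> < 0" using assms by simp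
  finally show "lead_coeff (G (Suc n) b) * (-1) ^ degree (G (Suc n) b) < 0" .
qed

definition Inv1 :: "nat \<Rightarrow> real \<Rightarrow> bool" where
  "Inv1 n b \<longleftrightarrow> finite {x. poly (G (Suc n) b) x = 0} \<and> card {x. poly (G (Suc n) b) x = 0} = n \<and>
     (\<forall>x. poly (G (Suc n) b) x = 0 \<longrightarrow> x < 0) \<and>
     G (Suc n) b = smult (-((b-1)^n)) (\<Prod>s\<in>{x. poly (G (Suc n) b) x = 0}. [:-s,1:])"

lemma step_root_sgn:
  assumes "Inv1 n b" "r \<in> {x. poly (G (Suc n) b) x = 0}"
  shows "sgn (poly (G (Suc (Suc n)) b) r) = sgn (-((b-1)^n)) * (-1) ^ card {s\<in>{x. poly (G (Suc n) b) x = 0}. r < s}"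
proof -
  define S where "S = {x. poly (G (Suc n) b) x = 0}"
  define c where "c = -((b-1)^n)"
  have fin: "finite S" and r: "r \<in> S" and neg: "r < 0" and fac: "G (Suc n) b = smult c (\<Prod>s\<in>S. [:-s,1:])"
    using assms unfolding Inv1_def S_def c_def by auto
  have P0: "poly (G (Suc n) b) r = 0" using r S_def by simp
  have "poly (G (Suc (Suc n)) b) r = (r * (r - 1)) * poly (pderiv (G (Suc n) b)) r"
    using P0 by (simp add: algebra_simps)
  also have "poly (pderiv (G (Suc n) b)) r = c * (\<Prod>s\<in>S-{r}. (r - s))"
    by (subst fac) (simp add: pderiv_smult poly_pderiv_prod_root[OF fin r])
  finally have "sgn (poly (G (Suc (Suc n)) b) r) = sgn (r * (r - 1)) * (sgn c * sgn (\<Prod>s\<in>S-{r}. (r - s)))"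
    by (simp add: sgn_mult)
  also have "sgn (r * (r - 1)) = 1" using neg by (simp add: sgn_mult)
  also have "sgn (\<Prod>s\<in>S-{r}. (r - s)) = (-1) ^ card {s\<in>S-{r}. r < s}"
    using fin by (intro sgn_prod_diff) auto
  also have "{s\<in>S-{r}. r < s} = {s\<in>S. r < s}" by auto
  finally show ?thesis by (simp add: S_def c_def)
qed

lemma step_zero_sgn:
  assumes "Inv1 n b" "0 < b"
  shows "sgn (poly (G (Suc (Suc n)) b) 0) = - sgn (-((b-1)^n))"
proof -
  define S where "S = {x. poly (G (Suc n) b) x = 0}"
  define c where "c = -((b-1)^n)"
  have fin: "finite S" and neg: "\<forall>s\<in>S. s < 0" and fac: "G (Suc n) b = smult c (\<Prod>s\<in>S. [:-s,1:])"
    using assms unfolding Inv1_def S_def c_def by auto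
  have "poly (G (Suc (Suc n)) b) 0 = - b * poly (G (Suc n) b) 0" by simp
  then have "sgn (poly (G (Suc (Suc n)) b) 0) = - sgn (poly (G (Suc n) b) 0)"
    using assms(2) by (simp add: sgn_mult)
  also have "sgn (poly (G (Suc n) b) 0) = sgn c * (-1) ^ card {s\<in>S. 0 < s}"
    using fin neg by (subst fac, intro poly_factored_sgn) auto
  also have "{s\<in>S. 0 < s} = {}" using neg by auto
  finally show ?thesis by (simp add: c_def)
qed


lemma lower_bound_below:
  fixes S :: "real set"
  assumes "finite S"
  obtains x1 where "x1 \<le> x0" "x1 < -1" "\<forall>s\<in>S. x1 < s"
proof -
  define x1 where "x1 = min x0 (min (-2) (Min (insert 0 S) - 1))"
  have "\<forall>s\<in>S. x1 < s"
  proof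
    fix s assume "s \<in> S"
    then have "Min (insert 0 S) \<le> s" using assms by auto
    then show "x1 < s" unfolding x1_def by linarith
  qed
  then show ?thesis using that[of x1] unfolding x1_def by auto
qed

lemma inv1: assumes "0 < b" "b < 1" shows "Inv1 n b"
proof (induction n)
  case 0
  have "{x. poly (G (Suc 0) b) x = 0} = {}" by simp
  then show ?case unfolding Inv1_def by simp
next
  case (Suc n)
  define S where "S = {x. poly (G (Suc n) b) x = 0}"
  define c where "c = -((b-1)^n)"
  define Q where "Q = G (Suc (Suc n)) b"
  have fin: "finite S" and cS: "card S = n" and neg: "\<forall>s\<in>S. s < 0"
    using Suc unfolding Inv1_def S_def by auto
  have sc: "sgn c = - ((-1)^n)" unfolding c_def using assms(2) by (rule sgn_c)
  have rs: "sgn (poly Q r) = sgn c * (-1) ^ card {s\<in>S. r < s}" if "r \<in> S" for r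
    using step_root_sgn[OF Suc, of r] that unfolding S_def c_def Q_def by auto
  have zs: "sgn (poly Q 0) = - sgn c"
    using step_zero_sgn[OF Suc assms(1)] unfolding c_def Q_def by auto
  obtain x0 where x0: "\<forall>x\<le>x0. poly Q x < 0" using neg_infty_G[OF assms(2), of "Suc n"] unfolding Q_def by auto
  obtain x1 where x1: "x1 \<le> x0" "x1 < -1" "\<forall>s\<in>S. x1 < s" using lower_bound_below[OF fin] by blast
  define A where "A = insert x1 (insert 0 S)"
  define \<sigma> :: real where "\<sigma> = (-1)^n"
  have finA: "finite A" using fin A_def by auto
  have x1nA: "x1 \<notin> insert 0 S" using x1 by auto
  have zS: "0 \<notin> S" using neg by auto
  have cA: "card A = Suc (Suc n)" using x1nA zS fin cS unfolding A_def by simp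
  have sig: "\<sigma> = 1 \<or> \<sigma> = -1" unfolding \<sigma>_def by (cases "even n") auto
  have alt: "\<forall>a\<in>A. sgn (poly Q a) = \<sigma> * (-1) ^ card {a'\<in>A. a < a'}"
  proof
    fix a assume "a \<in> A"
    then consider "a = x1" | "a = 0" | "a \<in> S" unfolding A_def by auto
    then show "sgn (poly Q a) = \<sigma> * (-1) ^ card {a'\<in>A. a < a'}"
    proof cases
      case 1
      have "{a'\<in>A. a < a'} = insert 0 S" using 1 x1 A_def by auto
      then have "card {a'\<in>A. a < a'} = Suc n" using zS fin cS by simp
      moreover have "sgn (poly Q a) = -1" using x0 x1 1 by simp
      ultimately show ?thesis unfolding \<sigma>_def by simp
    next
      case 2
      have e: "{a'\<in>A. a < a'} = {}" using 2 x1 neg A_def by auto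
      have "card {a'\<in>A. a < a'} = 0" by (simp only: e card.empty)
      then show ?thesis using zs sc 2 unfolding \<sigma>_def by simp
    next
      case 3
      have "{a'\<in>A. a < a'} = insert 0 {s\<in>S. a < s}" using 3 x1 neg A_def by auto
      then have "card {a'\<in>A. a < a'} = Suc (card {s\<in>S. a < s})" using zS fin by simp
      then show ?thesis using rs[OF 3] sc unfolding \<sigma>_def by simp
    qed
  qed
  have Q0: "Q \<noteq> 0" and dQ: "degree Q = Suc n" and lQ: "lead_coeff Q = -((b-1)^Suc n)"
    using G_facts[OF assms(2), of "Suc n"] unfolding Q_def by auto
  have minA: "Min A = x1" using finA x1 neg unfolding A_def by (intro Min_eqI) auto
  have maxA: "Max A = 0" using finA x1 neg unfolding A_def by (intro Max_eqI) auto
  have low: "Suc n \<le> card {x. x1 < x \<and> x < 0 \<and> poly Q x = 0}"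
    using alt_roots[OF finA Q0 sig alt] cA minA maxA by simp
  have finR: "finite {x. poly Q x = 0}" using Q0 by (rule poly_roots_finite)
  have up: "card {x. poly Q x = 0} \<le> Suc n" using card_poly_roots_bound[OF Q0] dQ by simp
  have eq: "{x. x1 < x \<and> x < 0 \<and> poly Q x = 0} = {x. poly Q x = 0}"
    by (rule card_seteq[OF finR]) (use low up in auto)
  have cR: "card {x. poly Q x = 0} = Suc n"
    using low up eq by simp
  have negR: "\<forall>x. poly Q x = 0 \<longrightarrow> x < 0" using eq by blast
  have fac: "Q = smult (lead_coeff Q) (\<Prod>x\<in>{x. poly Q x = 0}. [:-x, 1:])"
    by (rule factor_roots[OF Q0]) (use cR dQ in simp)
  show ?case unfolding Inv1_def Q_def[symmetric]
    using finR cR negR fac lQ by metis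
qed


lemma g_nz:
  assumes "0 < b" "b < 1" "b \<noteq> 1/2"
  shows "poly (G (Suc n) b) (-1) \<noteq> 0"
proof -
  have "sgn (g (Suc n) b) \<noteq> 0"
  proof (cases "b < 1/2")
    case True
    then show ?thesis using g_sign[of b n] assms by auto
  next
    case False
    then show ?thesis using g_sign[of b n] assms by auto
  qed
  then show ?thesis unfolding g_def by auto
qed

lemma neg1_pow_eq: "((-1::real)^a = (-1)^b) \<Longrightarrow> (even a \<longleftrightarrow> even b)"
  by (cases "even a"; cases "even b") auto

lemma inv2:
  assumes "0 < b" "b < 1" "b \<noteq> 1/2"
  shows "card {x. poly (G (Suc n) b) x = 0 \<and> -1 < x} = (if b < 1/2 then Suc n div 2 else n div 2)"
proof (induction n)
  case 0
  have "{x. poly (G (Suc 0) b) x = 0 \<and> -1 < x} = {}" by simp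
  then show ?case by simp
next
  case (Suc n)
  define S where "S = {x. poly (G (Suc n) b) x = 0}"
  define T where "T = {x. poly (G (Suc (Suc n)) b) x = 0}"
  define c where "c = -((b-1)^n)"
  define Q where "Q = G (Suc (Suc n)) b"
  define k where "k = card {s\<in>S. -1 < s}"
  define k' where "k' = card {t\<in>T. -1 < t}"
  have TQ: "T = {x. poly Q x = 0}" unfolding T_def Q_def ..
  have I1: "Inv1 n b" and I2: "Inv1 (Suc n) b" using inv1 assms by auto
  have fin: "finite S" and cS: "card S = n" and neg: "\<forall>s\<in>S. s < 0"
    using I1 unfolding Inv1_def S_def by auto
  have I2': "finite T \<and> card T = Suc n \<and> (\<forall>x. poly Q x = 0 \<longrightarrow> x < 0) \<and> Q = smult (-((b-1)^Suc n)) (\<Prod>s\<in>T. [:-s,1:])"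
    using I2 unfolding Inv1_def Q_def[symmetric] TQ[symmetric] .
  have finT: "finite T" and cT: "card T = Suc n" and facT: "Q = smult (-((b-1)^Suc n)) (\<Prod>s\<in>T. [:-s,1:])"
    using I2' by blast+
  have m1S: "-1 \<notin> S" using g_nz[OF assms, of n] unfolding S_def by auto
  have m1T: "-1 \<notin> T" using g_nz[OF assms, of "Suc n"] unfolding T_def by auto
  have sc: "sgn c = - ((-1)^n)" unfolding c_def using assms(2) by (rule sgn_c)
  have rs: "sgn (poly Q r) = sgn c * (-1) ^ card {s\<in>S. r < s}" if "r \<in> S" for r
    using step_root_sgn[OF I1, of r] that unfolding S_def c_def Q_def by auto
  have zs: "sgn (poly Q 0) = - sgn c"
    using step_zero_sgn[OF I1 assms(1)] unfolding c_def Q_def by auto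
  obtain x0 where x0: "\<forall>x\<le>x0. poly Q x < 0" using neg_infty_G[OF assms(2), of "Suc n"] unfolding Q_def by auto
  obtain x1 where x1: "x1 \<le> x0" "x1 < -1" "\<forall>s\<in>S. x1 < s" using lower_bound_below[OF fin] by blast
  have Q0: "Q \<noteq> 0" using G_facts[OF assms(2), of "Suc n"] unfolding Q_def by auto
  have finTs: "finite {x. x \<in> T \<and> P x}" for P using finT by auto
  define A1 where "A1 = insert 0 {s\<in>S. -1 < s}"
  have zS: "0 \<notin> S" using neg by auto
  have finA1: "finite A1" using fin A1_def by auto
  have cA1: "card A1 = Suc k" unfolding A1_def k_def using zS fin by simp
  have sig1: "(-1::real)^n = 1 \<or> (-1::real)^n = -1" by (cases "even n") auto
  have alt1: "\<forall>a\<in>A1. sgn (poly Q a) = (-1)^n * (-1) ^ card {a'\<in>A1. a < a'}"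
  proof
    fix a assume "a \<in> A1"
    then consider "a = 0" | "a \<in> S" "-1 < a" unfolding A1_def by auto
    then show "sgn (poly Q a) = (-1)^n * (-1) ^ card {a'\<in>A1. a < a'}"
    proof cases
      case 1
      have e: "{a'\<in>A1. a < a'} = {}" using 1 neg A1_def by auto
      have "card {a'\<in>A1. a < a'} = 0" by (simp only: e card.empty)
      then show ?thesis using zs sc 1 by simp
    next
      case 2
      have "{a'\<in>A1. a < a'} = insert 0 {s\<in>S. a < s}" using 2 neg A1_def by auto
      then have "card {a'\<in>A1. a < a'} = Suc (card {s\<in>S. a < s})" using zS fin by simp
      then show ?thesis using rs[OF 2(1)] sc by simp
    qed
  qed
  have maxA1: "Max A1 = 0" using finA1 neg unfolding A1_def by (intro Max_eqI) auto
  have minA1: "Min A1 > -1"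
  proof -
    have "Min A1 \<in> A1" using finA1 A1_def by (intro Min_in) auto
    then show ?thesis unfolding A1_def by auto
  qed
  have "k \<le> card {x. Min A1 < x \<and> x < Max A1 \<and> poly Q x = 0}"
    using alt_roots[OF finA1 Q0 sig1 alt1] cA1 by simp
  also have "\<dots> \<le> k'"
    unfolding k'_def TQ by (rule card_mono) (use finT TQ minA1 in auto)
  finally have lowk: "k \<le> k'" .
  define A2 where "A2 = insert x1 {s\<in>S. s < -1}"
  have finA2: "finite A2" using fin A2_def by auto
  have splitS: "S = {s\<in>S. s < -1} \<union> {s\<in>S. -1 < s}" using m1S by (auto, metis neq_iff)
  have cS2: "card {s\<in>S. s < -1} + k = n"
    unfolding k_def cS[symmetric] by (subst (3) splitS, rule card_Un_disjoint[symmetric]) (use fin in auto)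
  have cA2: "card A2 = Suc (n - k)" unfolding A2_def using x1 fin cS2 by auto
  define \<sigma>2 where "\<sigma>2 = sgn c * (-1)^k"
  have sig2: "\<sigma>2 = 1 \<or> \<sigma>2 = -1" unfolding \<sigma>2_def sc by (cases "even n"; cases "even k") auto
  have alt2: "\<forall>a\<in>A2. sgn (poly Q a) = \<sigma>2 * (-1) ^ card {a'\<in>A2. a < a'}"
  proof
    fix a assume "a \<in> A2"
    then consider "a = x1" | "a \<in> S" "a < -1" unfolding A2_def by auto
    then show "sgn (poly Q a) = \<sigma>2 * (-1) ^ card {a'\<in>A2. a < a'}"
    proof cases
      case 1
      have "{a'\<in>A2. a < a'} = {s\<in>S. s < -1}" using 1 x1 A2_def by auto
      then have "card {a'\<in>A2. a < a'} = n - k" using cS2 by simp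
      moreover have "sgn (poly Q a) = -1" using x0 x1 1 by simp
      moreover have "(-1::real)^k * (-1)^(n-k) = (-1)^n"
        using cS2 by (simp add: power_add[symmetric])
      moreover have "\<sigma>2 * (-1)^(n-k) = - ((-1)^n * ((-1::real)^k * (-1)^(n-k)))"
        unfolding \<sigma>2_def sc by (simp add: algebra_simps)
      moreover have "(-1::real)^n * (-1)^n = 1"
        by (simp add: power_add[symmetric])
      ultimately show ?thesis by simp
    next
      case 2
      have e1: "{a'\<in>A2. a < a'} = {s\<in>S. a < s \<and> s < -1}" using 2 x1 A2_def by auto
      have e2: "{s\<in>S. a < s} = {s\<in>S. a < s \<and> s < -1} \<union> {s\<in>S. -1 < s}" using 2 m1S by (auto, metis neq_iff)
      have "card {s\<in>S. a < s} = card {s\<in>S. a < s \<and> s < -1} + k"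
        unfolding k_def e2 by (rule card_Un_disjoint) (use fin in auto)
      then show ?thesis using rs[OF 2(1)] e1 unfolding \<sigma>2_def by (simp add: power_add)
    qed
  qed
  have maxA2: "Max A2 < -1"
  proof -
    have "Max A2 \<in> A2" using finA2 A2_def by (intro Max_in) auto
    then show ?thesis unfolding A2_def using x1 by auto
  qed
  have "n - k \<le> card {x. Min A2 < x \<and> x < Max A2 \<and> poly Q x = 0}"
    using alt_roots[OF finA2 Q0 sig2 alt2] cA2 by simp
  also have "\<dots> \<le> card {t\<in>T. t < -1}"
    by (rule card_mono) (use finT TQ maxA2 in auto)
  finally have up1: "n - k \<le> card {t\<in>T. t < -1}" .
  have splitT: "T = {t\<in>T. t < -1} \<union> {t\<in>T. -1 < t}" using m1T by (auto, metis neq_iff)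
  have "card {t\<in>T. t < -1} + k' = Suc n"
    unfolding k'_def cT[symmetric] by (subst (3) splitT, rule card_Un_disjoint[symmetric]) (use finT in auto)
  then have upk: "k' \<le> Suc k" using up1 cS2 by linarith
  have "sgn (poly Q (-1)) = sgn (-((b-1)^Suc n)) * (-1) ^ k'"
    unfolding k'_def by (subst facT, rule poly_factored_sgn) (use finT m1T in auto)
  also have "sgn (-((b-1)^Suc n)) = -((-1)^Suc n)" using assms(2) by (rule sgn_c)
  finally have p1: "sgn (g (Suc (Suc n)) b) = (-1)^n * (-1)^k'" unfolding g_def Q_def by simp
  show ?case
  proof (cases "b < 1/2")
    case True
    then have "sgn (g (Suc (Suc n)) b) = (-1)^(Suc (Suc n)) * (-1)^(Suc (Suc n) div 2)"
      using g_sign[of b "Suc n"] assms by auto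
    then have "(-1::real)^k' = (-1)^(Suc (Suc n) div 2)" using p1 by (cases "even n") auto
    then have "even k' \<longleftrightarrow> even (Suc (Suc n) div 2)" by (rule neg1_pow_eq)
    moreover have "k = Suc n div 2" using Suc True unfolding k_def S_def by simp
    ultimately have "k' = Suc (Suc n) div 2" using lowk upk by presburger
    then show ?thesis using True unfolding k'_def T_def by simp
  next
    case False
    then have "sgn (g (Suc (Suc n)) b) = (-1)^(Suc (Suc n)) * (-1)^(Suc n div 2)"
      using g_sign[of b "Suc n"] assms by auto
    then have "(-1::real)^k' = (-1)^(Suc n div 2)" using p1 by (cases "even n") auto
    then have "even k' \<longleftrightarrow> even (Suc n div 2)" by (rule neg1_pow_eq)
    moreover have "k = n div 2" using Suc False unfolding k_def S_def by simp
    ultimately have "k' = Suc n div 2" using lowk upk by presburger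
    then show ?thesis using False unfolding k'_def T_def by simp
  qed
qed


lemma map_poly_of_real_mult:
  "map_poly (of_real :: real \<Rightarrow> complex) (p * q) = map_poly of_real p * map_poly of_real q"
  by (rule poly_eqI) (simp add: coeff_mult coeff_map_poly of_real_sum)

lemma map_poly_of_real_smult:
  "map_poly (of_real :: real \<Rightarrow> complex) (smult c p) = smult (of_real c) (map_poly of_real p)"
  by (rule poly_eqI) (simp add: coeff_map_poly)

lemma map_poly_of_real_prod:
  "finite S \<Longrightarrow> map_poly (of_real :: real \<Rightarrow> complex) (\<Prod>s\<in>S. f s) = (\<Prod>s\<in>S. map_poly of_real (f s))"
  by (induction S rule: finite_induct) (simp_all add: map_poly_of_real_mult)

lemma order_prod_lin:
  fixes a :: "'b \<Rightarrow> complex"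
  assumes "finite S"
  shows "order z (\<Prod>s\<in>S. [:-a s, 1:]) = card {s\<in>S. a s = z}"
  using assms
proof (induction S rule: finite_induct)
  case empty
  then show ?case by simp
next
  case (insert x S)
  have nz: "(\<Prod>s\<in>S. [:-a s, 1:]) \<noteq> 0" using insert by (auto simp: prod_zero_iff)
  have "order z (\<Prod>s\<in>insert x S. [:-a s, 1:]) = order z [:-a x, 1:] + order z (\<Prod>s\<in>S. [:-a s, 1:])"
    using insert nz by (simp del: mult_pCons_left add: order_mult)
  also have "order z [:-a x, 1:] = (if a x = z then 1 else 0)"
  proof (cases "a x = z")
    case True
    then show ?thesis using order_power_n_n[of z 1] by simp
  next
    case False
    then show ?thesis by (intro order_0I[THEN trans]) auto
  qed
  finally have o: "order z (\<Prod>s\<in>insert x S. [:-a s, 1:]) = (if a x = z then 1 else 0) + order z (\<Prod>s\<in>S. [:-a s, 1:])" .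
  have e: "{s\<in>insert x S. a s = z} = (if a x = z then insert x {s\<in>S. a s = z} else {s\<in>S. a s = z})"
    by auto
  show ?case using o e insert by auto
qed

lemma GC_facts:
  fixes n :: nat
  assumes "0 < b" "b < 1"
  defines "S \<equiv> {x. poly (G (Suc n) b) x = 0}"
  shows "GC (Suc n) b \<noteq> 0" "\<And>z. poly (GC (Suc n) b) z = 0 \<longleftrightarrow> z \<in> of_real ` S"
        "\<And>z. z \<in> of_real ` S \<Longrightarrow> order z (GC (Suc n) b) = 1"
proof -
  have I: "Inv1 n b" using inv1 assms by auto
  define c where "c = -((b-1)^n)"
  have fin: "finite S" and fac: "G (Suc n) b = smult c (\<Prod>s\<in>S. [:-s,1:])"
    using I unfolding Inv1_def S_def c_def by auto
  have c0: "c \<noteq> 0" using assms unfolding c_def by auto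
  have GCe: "GC (Suc n) b = smult (of_real c) (\<Prod>s\<in>S. [:-of_real s,1:])"
    unfolding GC_def by (subst fac) (simp add: map_poly_of_real_smult map_poly_of_real_prod[OF fin] map_poly_pCons)
  show "GC (Suc n) b \<noteq> 0" using c0 fin unfolding GCe by (auto simp: prod_zero_iff)
  show "poly (GC (Suc n) b) z = 0 \<longleftrightarrow> z \<in> of_real ` S" for z
    unfolding GCe using c0 fin by (auto simp: poly_prod prod_zero_iff)
  show "order z (GC (Suc n) b) = 1" if zS: "z \<in> of_real ` S" for z
  proof -
    obtain s0 where s0: "s0 \<in> S" "z = of_real s0" using zS by auto
    have "{s\<in>S. complex_of_real s = z} = {s0}" using s0 by auto
    then show ?thesis unfolding GCe using c0 fin
      by (simp add: order_smult order_prod_lin[where a = "\<lambda>s. complex_of_real s"])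
  qed
qed


lemma sum_order:
  fixes n :: nat
  assumes "0 < b" "b < 1"
  shows "(\<Sum>z\<in>{z. poly (GC (Suc n) b) z = 0 \<and> P z}. order z (GC (Suc n) b))
         = card {s. poly (G (Suc n) b) s = 0 \<and> P (of_real s)}"
proof -
  define S where "S = {x. poly (G (Suc n) b) x = 0}"
  have e: "{z. poly (GC (Suc n) b) z = 0 \<and> P z} = of_real ` {s\<in>S. P (of_real s)}"
    using GC_facts(2)[OF assms, of n] unfolding S_def by auto
  have "(\<Sum>z\<in>{z. poly (GC (Suc n) b) z = 0 \<and> P z}. order z (GC (Suc n) b))
        = (\<Sum>z\<in>(of_real :: real \<Rightarrow> complex) ` {s\<in>S. P (of_real s)}. (1::nat))"
    unfolding e by (rule sum.cong) (use GC_facts(3)[OF assms, where n=n] S_def in auto)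
  also have "\<dots> = card (of_real ` {s\<in>S. P (of_real s)} :: complex set)" by simp
  also have "\<dots> = card {s\<in>S. P (of_real s)}"
    by (rule card_image) (auto simp: inj_on_def)
  finally show ?thesis unfolding S_def by simp
qed

lemma counts:
  fixes n :: nat
  assumes "0 < b" "b < 1" "b \<noteq> 1/2"
  shows "card {s. poly (G (Suc n) b) s = 0 \<and> cmod (of_real s) < 1} = (if b < 1/2 then Suc n div 2 else n div 2)"
        "card {s. poly (G (Suc n) b) s = 0 \<and> cmod (of_real s) > 1} = n - (if b < 1/2 then Suc n div 2 else n div 2)"
proof -
  define S where "S = {x. poly (G (Suc n) b) x = 0}"
  have I: "Inv1 n b" using inv1 assms by auto
  have fin: "finite S" and cS: "card S = n" and neg: "\<forall>s\<in>S. s < 0"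
    using I unfolding Inv1_def S_def by auto
  have m1S: "-1 \<notin> S" using g_nz[OF assms, of n] unfolding S_def by auto
  have e1: "{s. poly (G (Suc n) b) s = 0 \<and> cmod (of_real s) < 1} = {s\<in>S. -1 < s}"
    using neg unfolding S_def by auto
  have e2: "{s. poly (G (Suc n) b) s = 0 \<and> cmod (of_real s) > 1} = {s\<in>S. s < -1}"
    using neg unfolding S_def by auto
  have k: "card {s\<in>S. -1 < s} = (if b < 1/2 then Suc n div 2 else n div 2)"
    using inv2[OF assms, of n] unfolding S_def by (simp add: conj_commute)
  have splitS: "S = {s\<in>S. s < -1} \<union> {s\<in>S. -1 < s}" using m1S by (auto, metis neq_iff)
  have cS2: "card {s\<in>S. s < -1} + card {s\<in>S. -1 < s} = n"
    unfolding cS[symmetric] by (subst (3) splitS, rule card_Un_disjoint[symmetric]) (use fin in auto)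
  show "card {s. poly (G (Suc n) b) s = 0 \<and> cmod (of_real s) < 1} = (if b < 1/2 then Suc n div 2 else n div 2)"
    using e1 k by simp
  show "card {s. poly (G (Suc n) b) s = 0 \<and> cmod (of_real s) > 1} = n - (if b < 1/2 then Suc n div 2 else n div 2)"
    using e2 k cS2 by simp
qed

theorem theorem4p7:
  fixes m :: nat and \<beta> :: real
  assumes "m \<ge> 2"
  shows "(0 < \<beta> \<and> \<beta> < 1 \<longrightarrow>
            G m \<beta> \<noteq> 0 \<and>
            (\<forall>z::complex. poly (GC m \<beta>) z = 0 \<longrightarrow>
                 z \<in> \<real> \<and> Re z < 0 \<and> order z (GC m \<beta>) = 1))
       \<and> (0 < \<beta> \<and> \<beta> < 1/2 \<longrightarrow>
            (\<Sum>z\<in>{z. poly (GC m \<beta>) z = 0 \<and> cmod z < 1}. order z (GC m \<beta>)) = m div 2 \<and>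
            (\<Sum>z\<in>{z. poly (GC m \<beta>) z = 0 \<and> cmod z > 1}. order z (GC m \<beta>)) = (m - 1) div 2)
       \<and> (1/2 < \<beta> \<and> \<beta> < 1 \<longrightarrow>
            (\<Sum>z\<in>{z. poly (GC m \<beta>) z = 0 \<and> cmod z < 1}. order z (GC m \<beta>)) = (m - 1) div 2 \<and>
            (\<Sum>z\<in>{z. poly (GC m \<beta>) z = 0 \<and> cmod z > 1}. order z (GC m \<beta>)) = m div 2)"
proof -
  obtain n where m: "m = Suc n" using assms by (cases m) auto
  have part1: "G m \<beta> \<noteq> 0 \<and>
            (\<forall>z::complex. poly (GC m \<beta>) z = 0 \<longrightarrow>
                 z \<in> \<real> \<and> Re z < 0 \<and> order z (GC m \<beta>) = 1)" if b: "0 < \<beta>" "\<beta> < 1"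
  proof -
    have I: "Inv1 n \<beta>" using inv1 b by auto
    have "G m \<beta> \<noteq> 0" using G_facts[OF b(2), of n] m by auto
    moreover have "z \<in> \<real> \<and> Re z < 0 \<and> order z (GC m \<beta>) = 1" if z: "poly (GC m \<beta>) z = 0" for z
    proof -
      obtain s where s: "poly (G (Suc n) \<beta>) s = 0" "z = of_real s"
        using GC_facts(2)[OF b, of n] z m by auto
      have "s < 0" using I s unfolding Inv1_def by auto
      moreover have "order z (GC m \<beta>) = 1" using GC_facts(3)[OF b, where n=n] s m by auto
      ultimately show ?thesis using s by auto
    qed
    ultimately show ?thesis by blast
  qed
  have part2: "(\<Sum>z\<in>{z. poly (GC m \<beta>) z = 0 \<and> cmod z < 1}. order z (GC m \<beta>)) = m div 2 \<and>
            (\<Sum>z\<in>{z. poly (GC m \<beta>) z = 0 \<and> cmod z > 1}. order z (GC m \<beta>)) = (m - 1) div 2"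
    if b: "0 < \<beta>" "\<beta> < 1/2"
  proof -
    have b': "0 < \<beta>" "\<beta> < 1" "\<beta> \<noteq> 1/2" using b by auto
    have ar: "n - Suc n div 2 = n div 2" by presburger
    show ?thesis unfolding m
      using sum_order[OF b'(1,2), of n "\<lambda>z. cmod z < 1"] sum_order[OF b'(1,2), of n "\<lambda>z. cmod z > 1"]
        counts[OF b', of n] b ar by auto
  qed
  have part3: "(\<Sum>z\<in>{z. poly (GC m \<beta>) z = 0 \<and> cmod z < 1}. order z (GC m \<beta>)) = (m - 1) div 2 \<and>
            (\<Sum>z\<in>{z. poly (GC m \<beta>) z = 0 \<and> cmod z > 1}. order z (GC m \<beta>)) = m div 2"
    if b: "1/2 < \<beta>" "\<beta> < 1"
  proof -
    have b': "0 < \<beta>" "\<beta> < 1" "\<beta> \<noteq> 1/2" using b by auto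
    have ar: "n - n div 2 = Suc n div 2" by presburger
    show ?thesis unfolding m
      using sum_order[OF b'(1,2), of n "\<lambda>z. cmod z < 1"] sum_order[OF b'(1,2), of n "\<lambda>z. cmod z > 1"]
        counts[OF b', of n] b ar by auto
  qed
  show ?thesis using part1 part2 part3 by blast
qed

end
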